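(* Let $V$ be a finite-dimensional vector space over $\mathbb{F}_q$, $\mathcal{F}$ a projective point family in $V$ of size $\nu$, $\varphi:\mathbb{F}_q^\nu\to V$ a parent function of $\mathcal{F}$ with parent code $P=\ker\varphi$, and $r=\lfloor (d_H(P)-1)/2\rfloor$. Let $x\in\mathbb{F}_q^\nu$. Then for every integer $t\le r$, $\varphi$ restricts to a bijection from the Hamming sphere $S^H_t(x)=\{y:d_H(x,y)=t\}\subseteq\mathbb{F}_q^\nu$ onto the sphere $S^{\mathcal{F}}_t(\varphi(x))=\{\varphi(x)+v: v\in V,\ \operatorname{wt}_{\mathcal{F}}(v)=t\}\subseteq V$.
   Context: A projective point family is a set of pairwise linearly independent nonzero vectors; $\operatorname{wt}_{\mathcal{F}}(v)=\min(\{|I|:I\subseteq\mathcal{F},v\in\langle I\rangle\}\cup\{\infty\})$. A parent function of $\mathcal{F}$ is a linear map $\varphi:\mathbb{F}_q^\nu\to V$ with $\{\langle\varphi(e_i)\rangle\}_{i=1}^\nu=\{\langle f\rangle: f\in\mathcal{F}\}$. $d_H(P)$ is the minimum Hamming distance between distinct elements of $P$. *)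

theory Defs
  imports Complex_Main "HOL-Library.Extended_Nat"
begin

text \<open>The coordinate space F_q^nu is represented by functions nat => 'a vanishing
  outside the index set {..<nu}.\<close>

definition coord_space :: "nat \<Rightarrow> (nat \<Rightarrow> 'a::zero) set" where
  "coord_space \<nu> = {x. \<forall>i. \<nu> \<le> i \<longrightarrow> x i = 0}"

definition unit_vec :: "nat \<Rightarrow> nat \<Rightarrow> 'a::{zero,one}" where
  "unit_vec i = (\<lambda>j. if j = i then 1 else 0)"

definition hamming_dist :: "nat \<Rightarrow> (nat \<Rightarrow> 'a) \<Rightarrow> (nat \<Rightarrow> 'a) \<Rightarrow> nat" where
  "hamming_dist \<nu> x y = card {i. i < \<nu> \<and> x i \<noteq> y i}"

text \<open>Minimum Hamming distance of a code P; infinity if P has fewer than two elements.\<close>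
definition min_hamming_dist :: "nat \<Rightarrow> (nat \<Rightarrow> 'a) set \<Rightarrow> enat" where
  "min_hamming_dist \<nu> P =
     Inf {enat (hamming_dist \<nu> x y) | x y. x \<in> P \<and> y \<in> P \<and> x \<noteq> y}"

definition hamming_sphere :: "nat \<Rightarrow> (nat \<Rightarrow> 'a::zero) \<Rightarrow> int \<Rightarrow> (nat \<Rightarrow> 'a) set" where
  "hamming_sphere \<nu> x t = {y \<in> coord_space \<nu>. int (hamming_dist \<nu> x y) = t}"

definition linear_on_coord ::
  "('a::field \<Rightarrow> 'v::ab_group_add \<Rightarrow> 'v) \<Rightarrow> nat \<Rightarrow> ((nat \<Rightarrow> 'a) \<Rightarrow> 'v) \<Rightarrow> bool" where
  "linear_on_coord scale \<nu> \<phi> \<longleftrightarrow>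
     (\<forall>x \<in> coord_space \<nu>. \<forall>y \<in> coord_space \<nu>. \<phi> (\<lambda>i. x i + y i) = \<phi> x + \<phi> y) \<and>
     (\<forall>c. \<forall>x \<in> coord_space \<nu>. \<phi> (\<lambda>i. c * x i) = scale c (\<phi> x))"

definition projective_point_family ::
  "('a::field \<Rightarrow> 'v::ab_group_add \<Rightarrow> 'v) \<Rightarrow> 'v set \<Rightarrow> bool" where
  "projective_point_family scale F \<longleftrightarrow>
     0 \<notin> F \<and> (\<forall>f \<in> F. \<forall>g \<in> F. f \<noteq> g \<longrightarrow> \<not> module.dependent scale {f, g})"

definition wt_F :: "('a::field \<Rightarrow> 'v::ab_group_add \<Rightarrow> 'v) \<Rightarrow> 'v set \<Rightarrow> 'v \<Rightarrow> enat" where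
  "wt_F scale F v = Inf ({enat (card I) | I. I \<subseteq> F \<and> v \<in> module.span scale I} \<union> {\<infinity>})"

definition parent_function ::
  "('a::field \<Rightarrow> 'v::ab_group_add \<Rightarrow> 'v) \<Rightarrow> 'v set \<Rightarrow> nat \<Rightarrow> ((nat \<Rightarrow> 'a) \<Rightarrow> 'v) \<Rightarrow> bool" where
  "parent_function scale F \<nu> \<phi> \<longleftrightarrow>
     linear_on_coord scale \<nu> \<phi> \<and>
     {module.span scale {\<phi> (unit_vec i)} | i. i < \<nu>} = {module.span scale {f} | f. f \<in> F}"

definition parent_code :: "nat \<Rightarrow> ((nat \<Rightarrow> 'a::zero) \<Rightarrow> 'v::zero) \<Rightarrow> (nat \<Rightarrow> 'a) set" where
  "parent_code \<nu> \<phi> = {x \<in> coord_space \<nu>. \<phi> x = 0}"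

definition F_sphere ::
  "('a::field \<Rightarrow> 'v::ab_group_add \<Rightarrow> 'v) \<Rightarrow> 'v set \<Rightarrow> 'v \<Rightarrow> int \<Rightarrow> 'v set" where
  "F_sphere scale F w t = {w + v | v. t \<ge> 0 \<and> wt_F scale F v = enat (nat t)}"

end

theory Submission
  imports Defs
begin

definition wH :: "nat \<Rightarrow> (nat \<Rightarrow> 'a::zero) \<Rightarrow> nat" where
  "wH \<nu> z = card {i. i < \<nu> \<and> z i \<noteq> 0}"

lemma hd_wH: "hamming_dist \<nu> x y = wH \<nu> (\<lambda>i. y i - (x i :: 'a::ab_group_add))"
  unfolding hamming_dist_def wH_def by (rule arg_cong[where f=card]) auto

lemma wH_diff: "wH \<nu> (\<lambda>i. a i - (b i :: 'a::ab_group_add)) \<le> wH \<nu> a + wH \<nu> b"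
proof -
  have "{i. i < \<nu> \<and> a i - b i \<noteq> 0} \<subseteq> {i. i < \<nu> \<and> a i \<noteq> 0} \<union> {i. i < \<nu> \<and> b i \<noteq> 0}"
    by auto
  then have "card {i. i < \<nu> \<and> a i - b i \<noteq> 0} \<le> card ({i. i < \<nu> \<and> a i \<noteq> 0} \<union> {i. i < \<nu> \<and> b i \<noteq> 0})"
    by (intro card_mono) auto
  also have "\<dots> \<le> wH \<nu> a + wH \<nu> b" unfolding wH_def by (rule card_Un_le)
  finally show ?thesis unfolding wH_def .
qed

lemma coord_diff: "x \<in> coord_space \<nu> \<Longrightarrow> y \<in> coord_space \<nu> \<Longrightarrow>
   (\<lambda>i. y i - (x i :: 'a::ab_group_add)) \<in> coord_space \<nu>"
  unfolding coord_space_def by auto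

lemma coord_add: "x \<in> coord_space \<nu> \<Longrightarrow> y \<in> coord_space \<nu> \<Longrightarrow>
   (\<lambda>i. y i + (x i :: 'a::ab_group_add)) \<in> coord_space \<nu>"
  unfolding coord_space_def by auto

lemma phi_add: assumes "linear_on_coord scale \<nu> \<phi>" "x \<in> coord_space \<nu>" "y \<in> coord_space \<nu>"
  shows "\<phi> (\<lambda>i. x i + y i) = \<phi> x + \<phi> y"
  using assms unfolding linear_on_coord_def by blast

lemma phi_zero: assumes "linear_on_coord scale \<nu> \<phi>" shows "\<phi> (\<lambda>i. 0) = 0"
proof -
  have z: "(\<lambda>i. 0) \<in> coord_space \<nu>" unfolding coord_space_def by auto
  have "\<phi> (\<lambda>i. 0 + 0) = \<phi> (\<lambda>i. 0) + \<phi> (\<lambda>i. 0)"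
    using phi_add[OF assms z z] by simp
  then show ?thesis by simp
qed

lemma phi_diff: assumes "linear_on_coord scale \<nu> \<phi>" "x \<in> coord_space \<nu>" "y \<in> coord_space \<nu>"
  shows "\<phi> (\<lambda>i. y i - x i) = \<phi> y - \<phi> x"
proof -
  have "\<phi> (\<lambda>i. (y i - x i) + x i) = \<phi> (\<lambda>i. y i - x i) + \<phi> x"
    using phi_add[OF assms(1) coord_diff[OF assms(2,3)] assms(2)] by simp
  then show ?thesis by (simp add: algebra_simps)
qed

lemma phi_sum: assumes lin: "linear_on_coord scale \<nu> \<phi>" and "finite S"
  and "\<forall>k\<in>S. h k \<in> coord_space \<nu>"
  shows "\<phi> (\<lambda>j. \<Sum>k\<in>S. h k j) = (\<Sum>k\<in>S. \<phi> (h k))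
     \<and> (\<lambda>j. \<Sum>k\<in>S. h k j) \<in> coord_space \<nu>"
  using assms(2,3)
proof (induction S rule: finite_induct)
  case empty
  then show ?case using phi_zero[OF lin] by (simp add: coord_space_def)
next
  case (insert a S)
  then have ha: "h a \<in> coord_space \<nu>" and IH: "\<phi> (\<lambda>j. \<Sum>k\<in>S. h k j) = (\<Sum>k\<in>S. \<phi> (h k))"
     "(\<lambda>j. \<Sum>k\<in>S. h k j) \<in> coord_space \<nu>" by auto
  have "\<phi> (\<lambda>j. \<Sum>k\<in>insert a S. h k j) = \<phi> (\<lambda>j. h a j + (\<Sum>k\<in>S. h k j))"
    using insert by simp
  also have "\<dots> = \<phi> (h a) + \<phi> (\<lambda>j. \<Sum>k\<in>S. h k j)"
    using phi_add[OF lin ha IH(2)] by simp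
  finally show ?case using insert IH ha coord_add[OF IH(2) ha] by simp
qed

lemma phi_scale: assumes "linear_on_coord scale \<nu> \<phi>" "x \<in> coord_space \<nu>"
  shows "\<phi> (\<lambda>i. c * x i) = scale c (\<phi> x)"
  using assms unfolding linear_on_coord_def by blast

lemma unit_coord: "i < \<nu> \<Longrightarrow> (\<lambda>j. (c::'a::field) * unit_vec i j) \<in> coord_space \<nu>"
  unfolding coord_space_def unit_vec_def by auto

lemma parent_choice:
  assumes "parent_function scale F \<nu> \<phi>"
  shows "\<exists>f. \<forall>i<\<nu>. f i \<in> F \<and> module.span scale {\<phi> (unit_vec i)} = module.span scale {f i}"
proof -
  have "\<forall>i<\<nu>. \<exists>g. g \<in> F \<and> module.span scale {\<phi> (unit_vec i)} = module.span scale {g}"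
  proof (intro allI impI)
    fix i assume "i < \<nu>"
    then have "module.span scale {\<phi> (unit_vec i)} \<in> {module.span scale {\<phi> (unit_vec i)} | i. i < \<nu>}"
      by blast
    then show "\<exists>g. g \<in> F \<and> module.span scale {\<phi> (unit_vec i)} = module.span scale {g}"
      using assms unfolding parent_function_def by auto
  qed
  then show ?thesis by metis
qed

lemma wt_upper:
  fixes scale :: "'a::field \<Rightarrow> 'v::ab_group_add \<Rightarrow> 'v"
  assumes vs: "vector_space scale" and parent: "parent_function scale F \<nu> \<phi>"
    and z: "z \<in> coord_space \<nu>"
  shows "wt_F scale F (\<phi> z) \<le> enat (wH \<nu> z)"
proof -
  interpret vector_space scale by (rule vs)
  have lin: "linear_on_coord scale \<nu> \<phi>" using parent unfolding parent_function_def by simp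
  define S where "S = {i. i < \<nu> \<and> z i \<noteq> 0}"
  have finS: "finite S" unfolding S_def by auto
  have zeq: "z = (\<lambda>j. \<Sum>i\<in>S. z i * unit_vec i j)"
  proof
    fix j
    have "(\<Sum>i\<in>S. z i * unit_vec i j) = (\<Sum>i\<in>S. if i = j then z j else 0)"
      by (rule sum.cong) (auto simp: unit_vec_def)
    also have "\<dots> = (if j \<in> S then z j else 0)" using finS by simp
    also have "\<dots> = z j" using z unfolding S_def coord_space_def by auto
    finally show "z j = (\<Sum>i\<in>S. z i * unit_vec i j)" by simp
  qed
  have Sc: "\<forall>i\<in>S. (\<lambda>j. z i * unit_vec i j) \<in> coord_space \<nu>"
    using unit_coord unfolding S_def by auto
  have "\<phi> z = (\<Sum>i\<in>S. \<phi> (\<lambda>j. z i * unit_vec i j))"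
    using phi_sum[OF lin finS Sc] zeq by simp
  also have "\<dots> = (\<Sum>i\<in>S. scale (z i) (\<phi> (unit_vec i)))"
  proof (rule sum.cong)
    fix i assume "i \<in> S"
    then have "unit_vec i \<in> coord_space \<nu>" unfolding S_def coord_space_def unit_vec_def by auto
    then show "\<phi> (\<lambda>j. z i * unit_vec i j) = scale (z i) (\<phi> (unit_vec i))"
      using phi_scale[OF lin] by blast
  qed simp
  finally have phz: "\<phi> z = (\<Sum>i\<in>S. scale (z i) (\<phi> (unit_vec i)))" .
  obtain f where f: "\<forall>i<\<nu>. f i \<in> F \<and> span {\<phi> (unit_vec i)} = span {f i}"
    using parent_choice[OF parent] by blast
  have "\<phi> z \<in> span (f ` S)"
    unfolding phz
  proof (rule span_sum, rule span_scale)
    fix i assume i: "i \<in> S"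
    have "\<phi> (unit_vec i) \<in> span {f i}" using f i span_base[of "\<phi> (unit_vec i)" "{\<phi> (unit_vec i)}"]
      unfolding S_def by auto
    also have "\<dots> \<subseteq> span (f ` S)" using i by (intro span_mono) auto
    finally show "\<phi> (unit_vec i) \<in> span (f ` S)" .
  qed
  moreover have "f ` S \<subseteq> F" using f unfolding S_def by auto
  ultimately have "enat (card (f ` S)) \<in> {enat (card I) | I. I \<subseteq> F \<and> \<phi> z \<in> span I} \<union> {\<infinity>}"
    by blast
  then have "wt_F scale F (\<phi> z) \<le> enat (card (f ` S))"
    unfolding wt_F_def by (rule Inf_lower)
  also have "\<dots> \<le> enat (card S)" using card_image_le[OF finS] by simp
  finally show ?thesis unfolding wH_def S_def .
qed

lemma wt_attained:
  assumes "wt_F scale F v = enat s"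
  shows "\<exists>I. I \<subseteq> F \<and> v \<in> module.span scale I \<and> card I = s"
proof -
  let ?A = "{enat (card I) | I. I \<subseteq> F \<and> v \<in> module.span scale I} \<union> {\<infinity>}"
  have inA: "\<infinity> \<in> ?A" by blast
  then have ne: "?A \<noteq> {}" by blast
  have "(LEAST x. x \<in> ?A) \<in> ?A" by (rule LeastI[of "\<lambda>x. x \<in> ?A", OF inA])
  moreover have "Inf ?A = (LEAST x. x \<in> ?A)" unfolding Inf_enat_def by (rule if_not_P[OF ne])
  ultimately have "Inf ?A \<in> ?A" by simp
  then have "enat s \<in> ?A" using assms unfolding wt_F_def by simp
  then show ?thesis by auto
qed

lemma wt_lower:
  fixes scale :: "'a::field \<Rightarrow> 'v::ab_group_add \<Rightarrow> 'v"
  assumes vs: "vector_space scale" and parent: "parent_function scale F \<nu> \<phi>"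
    and finF: "finite F" and w: "wt_F scale F v = enat s"
  shows "\<exists>z \<in> coord_space \<nu>. \<phi> z = v \<and> wH \<nu> z \<le> s"
proof -
  interpret vector_space scale by (rule vs)
  have lin: "linear_on_coord scale \<nu> \<phi>" using parent unfolding parent_function_def by simp
  obtain I where I: "I \<subseteq> F" "v \<in> span I" "card I = s" using wt_attained[OF w] by blast
  have finI: "finite I" using I(1) finF finite_subset by blast
  have "\<forall>f\<in>I. \<exists>i c. i < \<nu> \<and> f = scale c (\<phi> (unit_vec i))"
  proof
    fix f assume "f \<in> I"
    then have "span {f} \<in> {span {g} | g. g \<in> F}" using I(1) by blast
    then have "span {f} \<in> {span {\<phi> (unit_vec i)} | i. i < \<nu>}"
      using parent unfolding parent_function_def by simp
    then obtain i where i: "i < \<nu>" "span {f} = span {\<phi> (unit_vec i)}"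
      by blast
    have "f \<in> span {f}" by (rule span_base) simp
    then have "f \<in> range (\<lambda>k. scale k (\<phi> (unit_vec i)))" using i(2) span_singleton by simp
    then show "\<exists>i c. i < \<nu> \<and> f = scale c (\<phi> (unit_vec i))" using i(1) by blast
  qed
  then obtain ix cf where ixc: "\<forall>f\<in>I. ix f < \<nu> \<and> f = scale (cf f) (\<phi> (unit_vec (ix f)))"
    by metis
  obtain u where u: "v = (\<Sum>f\<in>I. scale (u f) f)" using I(2) span_finite[OF finI] by auto
  define h where "h = (\<lambda>f j. (u f * cf f) * unit_vec (ix f) j)"
  define z where "z = (\<lambda>j. \<Sum>f\<in>I. h f j)"
  have hc: "\<forall>f\<in>I. h f \<in> coord_space \<nu>" unfolding h_def using ixc unit_coord by blast
  have ps: "\<phi> z = (\<Sum>f\<in>I. \<phi> (h f))" "z \<in> coord_space \<nu>"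
    using phi_sum[OF lin finI hc] unfolding z_def by auto
  have "\<phi> z = (\<Sum>f\<in>I. scale (u f) f)"
    unfolding ps(1)
  proof (rule sum.cong)
    fix f assume f: "f \<in> I"
    have uc: "unit_vec (ix f) \<in> coord_space \<nu>" using ixc f unfolding coord_space_def unit_vec_def by auto
    have "\<phi> (h f) = scale (u f * cf f) (\<phi> (unit_vec (ix f)))"
      unfolding h_def using phi_scale[OF lin uc] by blast
    also have "\<dots> = scale (u f) (scale (cf f) (\<phi> (unit_vec (ix f))))" by (simp only: scale_scale)
    also have "\<dots> = scale (u f) f" using ixc f by metis
    finally show "\<phi> (h f) = scale (u f) f" .
  qed simp
  then have pz: "\<phi> z = v" using u by simp
  have "{i. i < \<nu> \<and> z i \<noteq> 0} \<subseteq> ix ` I"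
  proof
    fix j assume j: "j \<in> {i. i < \<nu> \<and> z i \<noteq> 0}"
    show "j \<in> ix ` I"
    proof (rule ccontr)
      assume "j \<notin> ix ` I"
      then have "\<forall>f\<in>I. h f j = 0" unfolding h_def unit_vec_def by auto
      then have "z j = 0" unfolding z_def by simp
      then show False using j by simp
    qed
  qed
  then have "wH \<nu> z \<le> card (ix ` I)" unfolding wH_def using finI by (intro card_mono) auto
  also have "\<dots> \<le> s" using card_image_le[OF finI] I(3) by simp
  finally show ?thesis using pz ps(2) by blast
qed

lemma dist_cond:
  assumes lin: "linear_on_coord scale \<nu> \<phi>"
    and t: "min_hamming_dist \<nu> (parent_code \<nu> \<phi>) = \<infinity> \<or>
            (\<exists>d. min_hamming_dist \<nu> (parent_code \<nu> \<phi>) = enat d \<and>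
                 t \<le> \<lfloor>(real d - 1) / 2\<rfloor>)"
    and p: "p \<in> coord_space \<nu>" "\<phi> p = 0" "p \<noteq> (\<lambda>i. (0::'a::field))"
  shows "2 * t < int (wH \<nu> p)"
proof -
  have z: "(\<lambda>i. 0::'a) \<in> parent_code \<nu> \<phi>"
    using phi_zero[OF lin] unfolding parent_code_def coord_space_def by auto
  have pp: "p \<in> parent_code \<nu> \<phi>" using p unfolding parent_code_def by auto
  have hd: "hamming_dist \<nu> p (\<lambda>i. 0) = wH \<nu> p" unfolding hamming_dist_def wH_def by simp
  have "enat (hamming_dist \<nu> p (\<lambda>i. 0)) \<in>
     {enat (hamming_dist \<nu> x y) | x y. x \<in> parent_code \<nu> \<phi> \<and> y \<in> parent_code \<nu> \<phi> \<and> x \<noteq> y}"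
    using z pp p(3) by blast
  then have le: "min_hamming_dist \<nu> (parent_code \<nu> \<phi>) \<le> enat (wH \<nu> p)"
    unfolding min_hamming_dist_def hd[symmetric] by (rule Inf_lower)
  from t show ?thesis
  proof
    assume "min_hamming_dist \<nu> (parent_code \<nu> \<phi>) = \<infinity>"
    then show ?thesis using le by simp
  next
    assume "\<exists>d. min_hamming_dist \<nu> (parent_code \<nu> \<phi>) = enat d \<and> t \<le> \<lfloor>(real d - 1) / 2\<rfloor>"
    then obtain d where d: "min_hamming_dist \<nu> (parent_code \<nu> \<phi>) = enat d" "t \<le> \<lfloor>(real d - 1) / 2\<rfloor>"
      by blast
    have "d \<le> wH \<nu> p" using le d(1) by simp
    then have "real d \<le> real (wH \<nu> p)" by simp
    moreover have "real_of_int t \<le> (real d - 1) / 2" using d(2) le_floor_iff by blast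
    ultimately have "2 * real_of_int t < real (wH \<nu> p)" by (simp add: field_simps)
    then have "real_of_int (2*t) < real_of_int (int (wH \<nu> p))" by simp
    then show ?thesis by (simp only: of_int_less_iff)
  qed
qed

theorem proposition6p1:
  fixes scale :: "'a::{field,finite} \<Rightarrow> 'v::ab_group_add \<Rightarrow> 'v"
    and F :: "'v set" and \<nu> :: nat and \<phi> :: "(nat \<Rightarrow> 'a) \<Rightarrow> 'v"
    and x :: "nat \<Rightarrow> 'a" and t :: int
  assumes vs: "vector_space scale"
    and findim: "\<exists>B. finite B \<and> module.span scale B = UNIV"
    and ppf: "projective_point_family scale F"
    and finF: "finite F" and cardF: "card F = \<nu>"
    and parent: "parent_function scale F \<nu> \<phi>"
    and x: "x \<in> coord_space \<nu>"
    and t: "min_hamming_dist \<nu> (parent_code \<nu> \<phi>) = \<infinity> \<or>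
            (\<exists>d. min_hamming_dist \<nu> (parent_code \<nu> \<phi>) = enat d \<and>
                 t \<le> \<lfloor>(real d - 1) / 2\<rfloor>)"
  shows "bij_betw \<phi> (hamming_sphere \<nu> x t) (F_sphere scale F (\<phi> x) t)"
proof (cases "t \<ge> 0")
  case False
  then show ?thesis unfolding hamming_sphere_def F_sphere_def bij_betw_def by auto
next
  case True
  have lin: "linear_on_coord scale \<nu> \<phi>" using parent unfolding parent_function_def by simp
  define n where "n = nat t"
  have tn: "t = int n" using True n_def by simp
  have DC: "\<And>p. p \<in> coord_space \<nu> \<Longrightarrow> \<phi> p = 0 \<Longrightarrow> p \<noteq> (\<lambda>i. 0) \<Longrightarrow> 2 * n < wH \<nu> p"
  proof -
    fix p assume a: "p \<in> coord_space \<nu>" "\<phi> p = 0" "p \<noteq> (\<lambda>i. 0)"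
    have "2 * t < int (wH \<nu> p)" by (rule dist_cond[OF lin t a])
    then show "2 * n < wH \<nu> p" unfolding tn by linarith
  qed
  have sph: "y \<in> hamming_sphere \<nu> x t \<longleftrightarrow> y \<in> coord_space \<nu> \<and> wH \<nu> (\<lambda>i. y i - x i) = n" for y
    unfolding hamming_sphere_def hd_wH tn by simp
  have fsph: "w \<in> F_sphere scale F (\<phi> x) t \<longleftrightarrow> (\<exists>v. w = \<phi> x + v \<and> wt_F scale F v = enat n)" for w
    unfolding F_sphere_def tn by auto
  have inj: "inj_on \<phi> (hamming_sphere \<nu> x t)"
  proof (rule inj_onI)
    fix y1 y2 assume y1: "y1 \<in> hamming_sphere \<nu> x t" and y2: "y2 \<in> hamming_sphere \<nu> x t"
      and eq: "\<phi> y1 = \<phi> y2"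
    have c1: "y1 \<in> coord_space \<nu>" and c2: "y2 \<in> coord_space \<nu>" using y1 y2 sph by auto
    define p where "p = (\<lambda>i. y1 i - y2 i)"
    have pc: "p \<in> coord_space \<nu>" unfolding p_def using coord_diff[OF c2 c1] .
    have pz: "\<phi> p = 0" unfolding p_def using phi_diff[OF lin c2 c1] eq by simp
    have "p = (\<lambda>i. (\<lambda>i. y1 i - x i) i - (\<lambda>i. y2 i - x i) i)" unfolding p_def by simp
    then have "wH \<nu> p \<le> wH \<nu> (\<lambda>i. y1 i - x i) + wH \<nu> (\<lambda>i. y2 i - x i)"
      using wH_diff[of \<nu> "\<lambda>i. y1 i - x i" "\<lambda>i. y2 i - x i"] by simp
    also have "\<dots> = 2 * n" using y1 y2 sph by simp
    finally have le2: "wH \<nu> p \<le> 2 * n" .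
    have "p = (\<lambda>i. 0)"
    proof (rule ccontr)
      assume "p \<noteq> (\<lambda>i. 0)"
      from DC[OF pc pz this] le2 show False by linarith
    qed
    then have "\<And>i. y1 i - y2 i = 0" unfolding p_def by (metis fun_cong)
    then show "y1 = y2" by (simp add: fun_eq_iff)
  qed
  have into: "\<phi> y \<in> F_sphere scale F (\<phi> x) t" if y: "y \<in> hamming_sphere \<nu> x t" for y
  proof -
    have yc: "y \<in> coord_space \<nu>" and wy: "wH \<nu> (\<lambda>i. y i - x i) = n" using y sph by auto
    define w where "w = (\<lambda>i. y i - x i)"
    have wc: "w \<in> coord_space \<nu>" unfolding w_def using coord_diff[OF x yc] .
    have pw: "\<phi> y = \<phi> x + \<phi> w" unfolding w_def using phi_diff[OF lin x yc] by simp
    have up: "wt_F scale F (\<phi> w) \<le> enat n" using wt_upper[OF vs parent wc] wy w_def by simp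
    have "wt_F scale F (\<phi> w) = enat n"
    proof (rule ccontr)
      assume ne: "wt_F scale F (\<phi> w) \<noteq> enat n"
      then obtain s where s: "wt_F scale F (\<phi> w) = enat s" "s < n" using up
        by (cases "wt_F scale F (\<phi> w)") auto
      obtain z where z: "z \<in> coord_space \<nu>" "\<phi> z = \<phi> w" "wH \<nu> z \<le> s"
        using wt_lower[OF vs parent finF s(1)] by blast
      define p where "p = (\<lambda>i. w i - z i)"
      have pc: "p \<in> coord_space \<nu>" unfolding p_def using coord_diff[OF z(1) wc] .
      have pz: "\<phi> p = 0" unfolding p_def using phi_diff[OF lin z(1) wc] z(2) by simp
      have pn: "p \<noteq> (\<lambda>i. 0)"
      proof
        assume "p = (\<lambda>i. 0)"
        then have "\<And>i. w i - z i = 0" unfolding p_def by (metis fun_cong)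
        then have "w = z" by (simp add: fun_eq_iff)
        then show False using z(3) s(2) wy w_def by simp
      qed
      have "wH \<nu> p \<le> wH \<nu> w + wH \<nu> z" unfolding p_def by (rule wH_diff)
      then have "wH \<nu> p < 2 * n" using z(3) s(2) wy w_def by simp
      then show False using DC[OF pc pz pn] by simp
    qed
    then show ?thesis using fsph pw by blast
  qed
  have onto: "w \<in> \<phi> ` hamming_sphere \<nu> x t" if w: "w \<in> F_sphere scale F (\<phi> x) t" for w
  proof -
    obtain v where v: "w = \<phi> x + v" "wt_F scale F v = enat n" using w fsph by blast
    obtain z where z: "z \<in> coord_space \<nu>" "\<phi> z = v" "wH \<nu> z \<le> n"
      using wt_lower[OF vs parent finF v(2)] by blast
    have "enat n \<le> enat (wH \<nu> z)" using wt_upper[OF vs parent z(1)] z(2) v(2) by simp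
    then have wz: "wH \<nu> z = n" using z(3) by simp
    define y where "y = (\<lambda>i. x i + z i)"
    have yc: "y \<in> coord_space \<nu>" unfolding y_def using coord_add[OF z(1) x] .
    have py: "\<phi> y = w" unfolding y_def using phi_add[OF lin x z(1)] v z(2) by simp
    have "(\<lambda>i. y i - x i) = z" unfolding y_def by simp
    then have "y \<in> hamming_sphere \<nu> x t" using sph yc wz by simp
    then show ?thesis using py by blast
  qed
  show ?thesis unfolding bij_betw_def using inj into onto by blast
qed

end
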